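(* Suppose $\gamma=\lambda/L$ (so that $f_\gamma^\lambda=f_{1/L}$, where $f_{1/L}(z):=\min_yf(y)+\frac L2\|y-z\|^2$). Then for every $z\in\Omega_0$, $$\frac{f(z)-f_*}2\le f_{1/L}(z)-f_*\le f(z)-f_*.$$
   Context: $f:\mathbb{R}^d\to\mathbb{R}$ is closed, twice continuously differentiable with $\inf f=f_*>-\infty$ attained, $\tau$-weakly convex on $\mathbb{R}^d$ with $L\ge2\tau>0$, $\lambda>0$. For $\gamma>0$, $f_\gamma^\lambda(x):=\min_yf(y)+\frac\lambda{2\gamma}\|x-y\|^2$. $x_0\in\mathbb{R}^d$ is fixed, $\Delta:=f_\gamma^\lambda(x_0)-\min f_\gamma^\lambda$, $\Omega_0:=\{x:f_\gamma^\lambda(x)-\min f_\gamma^\lambda\le2\Delta\}$, $R_0=\sqrt{\Delta\gamma/(160\lambda)}$, $\Omega:=\mathrm{conv}(\{x:\exists w\in\Omega_0,\|x-w\|\le R_0\})$, and for all $x,y\in\Omega$: $\|\nabla f(x)-\nabla f(y)\|\le L\|x-y\|$ and $\|\nabla f(x)\|^2\le2L(f(x)-f_* )$. *)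

theory Defs
  imports "HOL-Analysis.Analysis"
begin

definition moreau_env :: "('a::real_normed_vector \<Rightarrow> real) \<Rightarrow> real \<Rightarrow> real \<Rightarrow> 'a \<Rightarrow> real" where
  "moreau_env f gam lam x = (INF y. f y + lam / (2 * gam) * (norm (x - y))\<^sup>2)"

definition weakly_convex :: "('a::real_normed_vector \<Rightarrow> real) \<Rightarrow> real \<Rightarrow> bool" where
  "weakly_convex f tau \<longleftrightarrow> convex_on UNIV (\<lambda>x. f x + tau / 2 * (norm x)\<^sup>2)"

end

theory Submission
  imports Defs
begin

lemma descent:
  fixes f :: "'a::euclidean_space \<Rightarrow> real" and grad :: "'a \<Rightarrow> 'a"
  assumes grad: "\<And>x. (f has_derivative (\<lambda>h. grad x \<bullet> h)) (at x)"
    and seg: "\<And>t. 0 \<le> t \<Longrightarrow> t \<le> 1 \<Longrightarrow> a + t *\<^sub>R (b - a) \<in> S"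
    and Lip: "\<And>x y. x \<in> S \<Longrightarrow> y \<in> S \<Longrightarrow> norm (grad x - grad y) \<le> L * norm (x - y)"
  shows "f b \<le> f a + grad a \<bullet> (b - a) + L / 2 * (norm (b - a))\<^sup>2"
proof -
  define u where "u = b - a"
  define phi where "phi t = f (a + t *\<^sub>R u) - t * (grad a \<bullet> u) - L / 2 * t\<^sup>2 * (norm u)\<^sup>2" for t
  have d: "(phi has_real_derivative (grad (a + t *\<^sub>R u) \<bullet> u - grad a \<bullet> u - L * t * (norm u)\<^sup>2)) (at t)" for t
  proof -
    have p: "((\<lambda>t. a + t *\<^sub>R u) has_derivative (\<lambda>h. h *\<^sub>R u)) (at t)"
      by (auto intro!: derivative_eq_intros)
    have "((\<lambda>t. f (a + t *\<^sub>R u)) has_derivative (\<lambda>h. grad (a + t *\<^sub>R u) \<bullet> (h *\<^sub>R u))) (at t)"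
      using has_derivative_compose[OF p grad] by simp
    then have "((\<lambda>t. f (a + t *\<^sub>R u)) has_real_derivative (grad (a + t *\<^sub>R u) \<bullet> u)) (at t)"
      unfolding has_field_derivative_def by (rule has_derivative_eq_rhs) (auto simp: fun_eq_iff)
    then show ?thesis unfolding phi_def
      by (auto intro!: derivative_eq_intros)
  qed
  have "phi 1 \<le> phi 0"
  proof (rule DERIV_nonpos_imp_nonincreasing[of 0 1])
    fix t :: real assume t0: "0 \<le> t" and t1: "t \<le> 1"
    have t: "0 \<le> t \<and> t \<le> 1" using t0 t1 by simp
    have "grad (a + t *\<^sub>R u) \<bullet> u - grad a \<bullet> u = (grad (a + t *\<^sub>R u) - grad a) \<bullet> u"
      by (simp add: inner_diff_left)
    also have "\<dots> \<le> norm (grad (a + t *\<^sub>R u) - grad a) * norm u"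
      by (rule norm_cauchy_schwarz)
    also have "\<dots> \<le> L * norm ((a + t *\<^sub>R u) - a) * norm u"
      apply (rule mult_right_mono[OF Lip]) using seg[of t] seg[of 0] t by (auto simp: u_def)
    also have "\<dots> = L * t * (norm u)\<^sup>2" using t by (simp add: power2_eq_square)
    finally show "\<exists>y. DERIV phi t :> y \<and> y \<le> 0" using d[of t] by (intro exI[of _ _]) auto
  qed simp
  then show ?thesis unfolding phi_def u_def by simp
qed

theorem lemma15:
  fixes f :: "'a::euclidean_space \<Rightarrow> real"
    and grad :: "'a \<Rightarrow> 'a"
    and H :: "'a \<Rightarrow> 'a \<Rightarrow>\<^sub>L 'a"
    and tau L lam gam :: real
    and x0 z :: 'a
  assumes grad: "\<And>x. (f has_derivative (\<lambda>h. grad x \<bullet> h)) (at x)"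
    and hess: "\<And>x. (grad has_derivative blinfun_apply (H x)) (at x)"
    and hess_cont: "continuous_on UNIV H"
    and attained: "\<exists>xs. \<forall>y. f xs \<le> f y"
    and wc: "weakly_convex f tau"
    and tau_pos: "tau > 0" and L_ge: "L \<ge> 2 * tau" and lam_pos: "lam > 0"
    and gam_def: "gam = lam / L"
    and Lip: "\<And>x y. x \<in> convex hull {x. \<exists>w \<in> {v. moreau_env f gam lam v - Inf (range (moreau_env f gam lam))
                   \<le> 2 * (moreau_env f gam lam x0 - Inf (range (moreau_env f gam lam)))}.
                   norm (x - w) \<le> sqrt ((moreau_env f gam lam x0 - Inf (range (moreau_env f gam lam))) * gam / (160 * lam))}
            \<Longrightarrow> y \<in> convex hull {x. \<exists>w \<in> {v. moreau_env f gam lam v - Inf (range (moreau_env f gam lam))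
                   \<le> 2 * (moreau_env f gam lam x0 - Inf (range (moreau_env f gam lam)))}.
                   norm (x - w) \<le> sqrt ((moreau_env f gam lam x0 - Inf (range (moreau_env f gam lam))) * gam / (160 * lam))}
            \<Longrightarrow> norm (grad x - grad y) \<le> L * norm (x - y)"
    and gradbd: "\<And>x. x \<in> convex hull {x. \<exists>w \<in> {v. moreau_env f gam lam v - Inf (range (moreau_env f gam lam))
                   \<le> 2 * (moreau_env f gam lam x0 - Inf (range (moreau_env f gam lam)))}.
                   norm (x - w) \<le> sqrt ((moreau_env f gam lam x0 - Inf (range (moreau_env f gam lam))) * gam / (160 * lam))}
            \<Longrightarrow> (norm (grad x))\<^sup>2 \<le> 2 * L * (f x - Inf (range f))"
    and z_in: "moreau_env f gam lam z - Inf (range (moreau_env f gam lam))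
                   \<le> 2 * (moreau_env f gam lam x0 - Inf (range (moreau_env f gam lam)))"
  shows "(f z - Inf (range f)) / 2 \<le> (INF y. f y + L / 2 * (norm (y - z))\<^sup>2) - Inf (range f)
       \<and> (INF y. f y + L / 2 * (norm (y - z))\<^sup>2) - Inf (range f) \<le> f z - Inf (range f)"
proof -
  define m where "m = Inf (range f)"
  obtain xs where xs: "\<And>y. f xs \<le> f y" using attained by blast
  have bdf: "bdd_below (range f)" by (rule bdd_belowI2[where m="f xs"]) (rule xs)
  have m_eq: "m = f xs" unfolding m_def
    by (rule antisym) (auto intro: cInf_lower[OF _ bdf] cINF_greatest xs)
  have fm: "\<And>y. m \<le> f y" using m_eq xs by simp
  have Lpos: "L > 0" using tau_pos L_ge by simp
  have gpos: "gam > 0" using gam_def lam_pos Lpos by simp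
  have coef: "lam / (2 * gam) = L / 2" using gam_def lam_pos Lpos gpos by (simp add: field_simps)
  define E where "E = moreau_env f gam lam"
  have E_eq: "E v = (INF y. f y + L / 2 * (norm (y - v))\<^sup>2)" for v
    unfolding E_def moreau_env_def coef by (simp add: norm_minus_commute)
  have bdh: "bdd_below (range (\<lambda>y. f y + L / 2 * (norm (y - v))\<^sup>2))" for v
    by (rule bdd_belowI2[of _ m]) (use fm Lpos in \<open>auto intro: add_increasing2\<close>)
  have E_le: "E v \<le> f y + L / 2 * (norm (y - v))\<^sup>2" for v y
    unfolding E_eq by (rule cINF_lower[OF bdh]) simp
  have E_ge: "m \<le> E v" for v
    unfolding E_eq by (rule cINF_greatest) (use fm Lpos in \<open>auto intro: add_increasing2\<close>)
  define mE where "mE = Inf (range E)"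
  have bdE: "bdd_below (range E)" by (rule bdd_belowI2[where m=m]) (rule E_ge)
  have mE_le: "mE \<le> E v" for v unfolding mE_def by (rule cInf_lower[OF _ bdE]) simp
  define h where "h y = f y + L / 2 * (norm (y - z))\<^sup>2" for y
  have fcont: "continuous_on UNIV f"
    using grad by (meson has_derivative_continuous continuous_at_imp_continuous_on)
  have hcont: "continuous_on S h" for S unfolding h_def
    by (intro continuous_intros continuous_on_subset[OF fcont]) auto
  define R where "R = sqrt (2 * (f z - m) / L)"
  obtain ys where ys: "ys \<in> cball z R" and ysmin: "\<And>y. y \<in> cball z R \<Longrightarrow> h ys \<le> h y"
  proof -
    have "R \<ge> 0" unfolding R_def using fm[of z] Lpos by simp
    then have "cball z R \<noteq> {}" by simp
    then show ?thesis using continuous_attains_inf[OF compact_cball _ hcont, of z R] that by blast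
  qed
  have ysmin': "h ys \<le> h y" for y
  proof (cases "y \<in> cball z R")
    case True then show ?thesis by (rule ysmin)
  next
    case False
    then have "R < norm (y - z)" by (simp add: dist_norm norm_minus_commute)
    moreover have "R \<ge> 0" unfolding R_def using fm[of z] Lpos by simp
    ultimately have "R\<^sup>2 \<le> (norm (y - z))\<^sup>2" by (intro power_mono) auto
    moreover have "R\<^sup>2 = 2 * (f z - m) / L" unfolding R_def using fm[of z] Lpos by simp
    ultimately have "f z - m \<le> L / 2 * (norm (y - z))\<^sup>2" using Lpos by (simp add: field_simps)
    then have "h z \<le> h y" unfolding h_def using fm[of y] by simp
    moreover have "h ys \<le> h z" by (rule ysmin) (use \<open>R \<ge> 0\<close> in simp)
    ultimately show ?thesis by simp
  qed
  have Ez: "E z = h ys" unfolding E_eq h_def[symmetric]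
    by (rule antisym) (auto intro: cINF_lower cINF_greatest ysmin' bdh[of z, folded h_def])
  define Om0 where "Om0 = {v. E v - mE \<le> 2 * (E x0 - mE)}"
  define r where "r = sqrt ((E x0 - mE) * gam / (160 * lam))"
  define Om where "Om = convex hull {x. \<exists>w \<in> Om0. norm (x - w) \<le> r}"
  have r0: "r \<ge> 0" unfolding r_def using mE_le[of x0] gpos lam_pos by simp
  have Om0_Om: "w \<in> Om" if "w \<in> Om0" for w
    unfolding Om_def by (rule hull_inc) (use that r0 in \<open>auto intro!: bexI[of _ w]\<close>)
  have zOm0: "z \<in> Om0" using z_in unfolding Om0_def E_def mE_def by simp
  have seg: "ys + t *\<^sub>R (z - ys) \<in> Om" if "0 \<le> t" "t \<le> 1" for t
  proof (rule Om0_Om)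
    let ?w = "ys + t *\<^sub>R (z - ys)"
    have "E ?w \<le> f ys + L / 2 * (norm (ys - ?w))\<^sup>2" by (rule E_le)
    also have "norm (ys - ?w) = t * norm (z - ys)" using that by simp
    also have "t * norm (z - ys) \<le> norm (ys - z)"
      using that by (simp add: norm_minus_commute mult_left_le_one_le)
    then have "L / 2 * (t * norm (z - ys))\<^sup>2 \<le> L / 2 * (norm (ys - z))\<^sup>2"
      using that Lpos by (intro mult_left_mono power_mono) auto
    then have "f ys + L / 2 * (t * norm (z - ys))\<^sup>2 \<le> h ys" unfolding h_def by simp
    finally have "E ?w \<le> E z" using Ez by simp
    then show "?w \<in> Om0" using zOm0 unfolding Om0_def by simp
  qed
  have LipOm: "norm (grad x - grad y) \<le> L * norm (x - y)" if "x \<in> Om" "y \<in> Om" for x y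
    using Lip[of x y] that unfolding Om_def Om0_def r_def E_def mE_def by blast
  have ysOm: "ys \<in> Om" using seg[of 0] by simp
  have gb: "(norm (grad ys))\<^sup>2 \<le> 2 * L * (f ys - m)"
    using gradbd[of ys] ysOm unfolding Om_def Om0_def r_def E_def mE_def m_def by blast
  have desc: "f z \<le> f ys + grad ys \<bullet> (z - ys) + L / 2 * (norm (z - ys))\<^sup>2"
    by (rule descent[OF grad seg LipOm])
  define d where "d = norm (z - ys)"
  define g where "g = norm (grad ys)"
  have "grad ys \<bullet> (z - ys) \<le> g * d" unfolding g_def d_def by (rule norm_cauchy_schwarz)
  also have "g * d \<le> g\<^sup>2 / (2 * L) + L / 2 * d\<^sup>2"
  proof -
    have "0 \<le> (g - L * d)\<^sup>2" by simp
    then have "2 * L * (g * d) \<le> g\<^sup>2 + L\<^sup>2 * d\<^sup>2" by (simp add: power2_eq_square algebra_simps)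
    then show ?thesis using Lpos by (simp add: field_simps power2_eq_square)
  qed
  also have "g\<^sup>2 / (2 * L) \<le> f ys - m" using gb Lpos unfolding g_def by (simp add: field_simps)
  finally have "f z - m \<le> 2 * (h ys - m)"
    using desc unfolding h_def d_def by (simp add: norm_minus_commute)
  moreover have "h ys \<le> f z" using ysmin'[of z] unfolding h_def by simp
  moreover have "(INF y. f y + L / 2 * (norm (y - z))\<^sup>2) = h ys"
    using Ez E_eq by simp
  ultimately show ?thesis unfolding m_def by simp
qed

end
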